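(* In the calculus $\lambda^{RE}$ described in the context: if $e_1\Rrightarrow^*e_2$, then for every constant $c$, $e_1\to^*c$ if and only if $e_2\to^*c$.
   Context: Syntax of $\lambda^{RE}$. Basic types $b ::= \mathsf{Bool}\mid\mathsf{Unit}$. Constants $c ::= \mathsf{true}\mid\mathsf{false}\mid\mathsf{unit}\mid (=_b)\mid (=_{(c,b)})$. Expressions $e ::= c\mid x\mid e\ e\mid \lambda x{:}\tau.\,e\mid \mathsf{BEq}_b\ e\ e\ e\mid \mathsf{XEq}_{x:\tau\to\tau}\ e\ e\ e$. Values $v ::= c\mid \lambda x{:}\tau.\,e\mid \mathsf{BEq}_b\ e\ e\ v\mid \mathsf{XEq}_{x:\tau\to\tau}\ e\ e\ v$. Types $\tau ::= \{x{:}b\mid e\}\mid x{:}\tau\to\tau\mid \mathsf{PEq}_{\tau}\{e\}\{e\}$. $e[x:=e']$ is capture-avoiding substitution. Reduction: evaluation contexts $E ::= \bullet\mid E\ e\mid v\ E\mid \mathsf{BEq}_b\ e\ e\ E\mid\mathsf{XEq}_{x:\tau\to\tau}\ e\ e\ E$; $E[e]\to E[e']$ if $e\to e'$; $(\lambda x{:}\tau.\,e)\ v\to e[x:=v]$; $(=_b)\ c_1\to(=_{(c_1,b)})$; $(=_{(c_1,b)})\ c_2\to\mathsf{true}$ if $c_1,c_2$ syntactically equal, else $\to\mathsf{false}$. $\to^*$ is the reflexive–transitive closure. Parallel reduction $e\Rrightarrow e'$ and $\tau\Rrightarrow\tau'$ is defined inductively: $x\Rrightarrow x$; $c\Rrightarrow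 c$; $\lambda x{:}\tau.e\Rrightarrow\lambda x{:}\tau'.e'$ if $\tau\Rrightarrow\tau'$, $e\Rrightarrow e'$; $e_1\ e_2\Rrightarrow e_1'\ e_2'$ if $e_i\Rrightarrow e_i'$; $(\lambda x{:}\tau.e)\ v\Rrightarrow e'[x:=v']$ if $e\Rrightarrow e'$ and $v\Rrightarrow v'$; $(=_b)\ c_1\Rrightarrow(=_{(c_1,b)})$; $(=_{(c_1,b)})\ c_2\Rrightarrow d$ where $d=\mathsf{true}$ if $c_1,c_2$ are syntactically equal and $\mathsf{false}$ otherwise; $\mathsf{BEq}_b\ e_l\ e_r\ e\Rrightarrow\mathsf{BEq}_b\ e_l'\ e_r'\ e'$ if $e_l\Rrightarrow e_l'$, $e_r\Rrightarrow e_r'$, $e\Rrightarrow e'$; $\mathsf{XEq}_{x:\tau_x\to\tau}\ e_l\ e_r\ e\Rrightarrow\mathsf{XEq}_{x:\tau_x'\to\tau'}\ e_l'\ e_r'\ e'$ if all five components parallel reduce; on types: $\{x{:}b\mid r\}\Rrightarrow\{x{:}b\mid r'\}$ if $r\Rrightarrow r'$; $x{:}\tau_x\to\tau\Rrightarrow x{:}\tau_x'\to\tau'$ if $\tau_x\Rrightarrow\tau_x'$, $\tau\Rrightarrow\tau'$; $\mathsf{PEq}_\tau\{e_l\}\{e_r\}\Rrightarrow\mathsf{PEq}_{\tau'}\{e_l'\}\{e_r'\}$ if all components parallel reduce. $\Rrightarrow^*$ is the reflexive–transitive closure of $\Rrightarrow$. *)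

theory Defs
  imports Main
begin

datatype basic = BBool | BUnit

datatype const =
    CTrue | CFalse | CUnit
  | CEq basic
  | CEqC const basic

(* Binders: Lam t e binds in e; TRef b r binds in r; TFun tx t binds in t;
   XEq tx t el er e binds in t only. *)
datatype expr =
    Const const
  | Var nat
  | App expr expr
  | Lam ty expr
  | BEq basic expr expr expr
  | XEq ty ty expr expr expr
and ty =
    TRef basic expr
  | TFun ty ty
  | PEq ty expr expr

primrec lift_e :: "nat \<Rightarrow> expr \<Rightarrow> expr" and lift_t :: "nat \<Rightarrow> ty \<Rightarrow> ty" where
  "lift_e k (Const c) = Const c"
| "lift_e k (Var i) = (if i < k then Var i else Var (Suc i))"
| "lift_e k (App e1 e2) = App (lift_e k e1) (lift_e k e2)"
| "lift_e k (Lam t e) = Lam (lift_t k t) (lift_e (Suc k) e)"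
| "lift_e k (BEq b l r e) = BEq b (lift_e k l) (lift_e k r) (lift_e k e)"
| "lift_e k (XEq tx t l r e) =
     XEq (lift_t k tx) (lift_t (Suc k) t) (lift_e k l) (lift_e k r) (lift_e k e)"
| "lift_t k (TRef b r) = TRef b (lift_e (Suc k) r)"
| "lift_t k (TFun tx t) = TFun (lift_t k tx) (lift_t (Suc k) t)"
| "lift_t k (PEq t l r) = PEq (lift_t k t) (lift_e k l) (lift_e k r)"

primrec subst_e :: "nat \<Rightarrow> expr \<Rightarrow> expr \<Rightarrow> expr"
  and subst_t :: "nat \<Rightarrow> expr \<Rightarrow> ty \<Rightarrow> ty" where
  "subst_e k s (Const c) = Const c"
| "subst_e k s (Var i) = (if i < k then Var i else if i = k then s else Var (i - 1))"
| "subst_e k s (App e1 e2) = App (subst_e k s e1) (subst_e k s e2)"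
| "subst_e k s (Lam t e) = Lam (subst_t k s t) (subst_e (Suc k) (lift_e 0 s) e)"
| "subst_e k s (BEq b l r e) = BEq b (subst_e k s l) (subst_e k s r) (subst_e k s e)"
| "subst_e k s (XEq tx t l r e) =
     XEq (subst_t k s tx) (subst_t (Suc k) (lift_e 0 s) t)
         (subst_e k s l) (subst_e k s r) (subst_e k s e)"
| "subst_t k s (TRef b r) = TRef b (subst_e (Suc k) (lift_e 0 s) r)"
| "subst_t k s (TFun tx t) = TFun (subst_t k s tx) (subst_t (Suc k) (lift_e 0 s) t)"
| "subst_t k s (PEq t l r) = PEq (subst_t k s t) (subst_e k s l) (subst_e k s r)"

definition inst :: "expr \<Rightarrow> expr \<Rightarrow> expr" where
  "inst e v = subst_e 0 v e"

inductive is_value :: "expr \<Rightarrow> bool" where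
  "is_value (Const c)"
| "is_value (Lam t e)"
| "is_value v \<Longrightarrow> is_value (BEq b l r v)"
| "is_value v \<Longrightarrow> is_value (XEq tx t l r v)"

definition eq_result :: "const \<Rightarrow> const \<Rightarrow> const" where
  "eq_result c1 c2 = (if c1 = c2 then CTrue else CFalse)"

section \<open>Small-step reduction (evaluation contexts as congruence rules)\<close>

inductive step :: "expr \<Rightarrow> expr \<Rightarrow> bool" where
  step_app1: "step e e' \<Longrightarrow> step (App e e2) (App e' e2)"
| step_app2: "is_value v \<Longrightarrow> step e e' \<Longrightarrow> step (App v e) (App v e')"
| step_beq: "step e e' \<Longrightarrow> step (BEq b l r e) (BEq b l r e')"
| step_xeq: "step e e' \<Longrightarrow> step (XEq tx t l r e) (XEq tx t l r e')"
| step_beta: "is_value v \<Longrightarrow> step (App (Lam t e) v) (inst e v)"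
| step_eq1: "step (App (Const (CEq b)) (Const c1)) (Const (CEqC c1 b))"
| step_eq2: "step (App (Const (CEqC c1 b)) (Const c2)) (Const (eq_result c1 c2))"

inductive par_e :: "expr \<Rightarrow> expr \<Rightarrow> bool" and par_t :: "ty \<Rightarrow> ty \<Rightarrow> bool" where
  par_var: "par_e (Var x) (Var x)"
| par_const: "par_e (Const c) (Const c)"
| par_lam: "par_t t t' \<Longrightarrow> par_e e e' \<Longrightarrow> par_e (Lam t e) (Lam t' e')"
| par_app: "par_e e1 e1' \<Longrightarrow> par_e e2 e2' \<Longrightarrow> par_e (App e1 e2) (App e1' e2')"
| par_beta: "is_value v \<Longrightarrow> par_e e e' \<Longrightarrow> par_e v v' \<Longrightarrow>
     par_e (App (Lam t e) v) (inst e' v')"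
| par_eq1: "par_e (App (Const (CEq b)) (Const c1)) (Const (CEqC c1 b))"
| par_eq2: "par_e (App (Const (CEqC c1 b)) (Const c2)) (Const (eq_result c1 c2))"
| par_beq: "par_e l l' \<Longrightarrow> par_e r r' \<Longrightarrow> par_e e e' \<Longrightarrow>
     par_e (BEq b l r e) (BEq b l' r' e')"
| par_xeq: "par_t tx tx' \<Longrightarrow> par_t t t' \<Longrightarrow> par_e l l' \<Longrightarrow> par_e r r' \<Longrightarrow> par_e e e' \<Longrightarrow>
     par_e (XEq tx t l r e) (XEq tx' t' l' r' e')"
| par_tref: "par_e r r' \<Longrightarrow> par_t (TRef b r) (TRef b r')"
| par_tfun: "par_t tx tx' \<Longrightarrow> par_t t t' \<Longrightarrow> par_t (TFun tx t) (TFun tx' t')"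
| par_peq: "par_t t t' \<Longrightarrow> par_e l l' \<Longrightarrow> par_e r r' \<Longrightarrow> par_t (PEq t l r) (PEq t' l' r')"

end

theory Submission
  imports Defs
begin

lemma lift_lift:
  "j \<le> i \<Longrightarrow> lift_e j (lift_e i e) = lift_e (Suc i) (lift_e j e)"
  "j \<le> i \<Longrightarrow> lift_t j (lift_t i t) = lift_t (Suc i) (lift_t j t)"
  by (induct e and t arbitrary: i j and i j) auto

lemma lift_subst1:
  "i \<le> k \<Longrightarrow> lift_e i (subst_e k s e) = subst_e (Suc k) (lift_e i s) (lift_e i e)"
  "i \<le> k \<Longrightarrow> lift_t i (subst_t k s t) = subst_t (Suc k) (lift_e i s) (lift_t i t)"
  by (induct e and t arbitrary: i k s and i k s) (auto simp: lift_lift)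

lemma lift_subst2:
  "k \<le> i \<Longrightarrow> lift_e i (subst_e k s e) = subst_e k (lift_e i s) (lift_e (Suc i) e)"
  "k \<le> i \<Longrightarrow> lift_t i (subst_t k s t) = subst_t k (lift_e i s) (lift_t (Suc i) t)"
  by (induct e and t arbitrary: i k s and i k s) (auto simp: lift_lift)

lemma subst_lift:
  "subst_e j w (lift_e j e) = e"
  "subst_t j w (lift_t j t) = t"
  by (induct e and t arbitrary: j w and j w) auto

lemma subst_subst:
  "j \<le> k \<Longrightarrow> subst_e k s (subst_e j w e) = subst_e j (subst_e k s w) (subst_e (Suc k) (lift_e j s) e)"
  "j \<le> k \<Longrightarrow> subst_t k s (subst_t j w t) = subst_t j (subst_e k s w) (subst_t (Suc k) (lift_e j s) t)"
  by (induct e and t arbitrary: j k s w and j k s w) (auto simp: lift_lift lift_subst1 subst_lift)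

primrec occ_e :: "nat \<Rightarrow> expr \<Rightarrow> nat" and occ_t :: "nat \<Rightarrow> ty \<Rightarrow> nat" where
  "occ_e k (Const c) = 0"
| "occ_e k (Var i) = (if i = k then 1 else 0)"
| "occ_e k (App e1 e2) = occ_e k e1 + occ_e k e2"
| "occ_e k (Lam t e) = occ_t k t + occ_e (Suc k) e"
| "occ_e k (BEq b l r e) = occ_e k l + occ_e k r + occ_e k e"
| "occ_e k (XEq tx t l r e) = occ_t k tx + occ_t (Suc k) t + occ_e k l + occ_e k r + occ_e k e"
| "occ_t k (TRef b r) = occ_e (Suc k) r"
| "occ_t k (TFun tx t) = occ_t k tx + occ_t (Suc k) t"
| "occ_t k (PEq t l r) = occ_t k t + occ_e k l + occ_e k r"

lemma occ_lift:
  "occ_e i (lift_e j e) = (if i < j then occ_e i e else if i = j then 0 else occ_e (i - 1) e)"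
  "occ_t i (lift_t j t) = (if i < j then occ_t i t else if i = j then 0 else occ_t (i - 1) t)"
  by (induct e and t arbitrary: i j and i j) auto

lemma occ_subst:
  "occ_e i (subst_e k s e) = (if i < k then occ_e i e else occ_e (Suc i) e) + occ_e k e * occ_e i s"
  "occ_t i (subst_t k s t) = (if i < k then occ_t i t else occ_t (Suc i) t) + occ_t k t * occ_e i s"
  by (induct e and t arbitrary: i k s and i k s) (auto simp: occ_lift algebra_simps)

inductive pn_e :: "expr \<Rightarrow> expr \<Rightarrow> nat \<Rightarrow> bool" and pn_t :: "ty \<Rightarrow> ty \<Rightarrow> nat \<Rightarrow> bool" where
  pn_var: "pn_e (Var x) (Var x) (Suc 0)"
| pn_const: "pn_e (Const c) (Const c) (Suc 0)"
| pn_lam: "pn_t t t' n1 \<Longrightarrow> pn_e e e' n2 \<Longrightarrow> pn_e (Lam t e) (Lam t' e') (Suc (n1 + n2))"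
| pn_app: "pn_e e1 e1' n1 \<Longrightarrow> pn_e e2 e2' n2 \<Longrightarrow> pn_e (App e1 e2) (App e1' e2') (Suc (n1 + n2))"
| pn_beta: "is_value v \<Longrightarrow> pn_e e e' n1 \<Longrightarrow> pn_e v v' n2 \<Longrightarrow>
     pn_e (App (Lam t e) v) (inst e' v') (Suc (n1 + occ_e 0 e' * n2))"
| pn_eq1: "pn_e (App (Const (CEq b)) (Const c1)) (Const (CEqC c1 b)) (Suc 0)"
| pn_eq2: "pn_e (App (Const (CEqC c1 b)) (Const c2)) (Const (eq_result c1 c2)) (Suc 0)"
| pn_beq: "pn_e l l' n1 \<Longrightarrow> pn_e r r' n2 \<Longrightarrow> pn_e e e' n3 \<Longrightarrow>
     pn_e (BEq b l r e) (BEq b l' r' e') (Suc (n1 + n2 + n3))"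
| pn_xeq: "pn_t tx tx' n1 \<Longrightarrow> pn_t t t' n2 \<Longrightarrow> pn_e l l' n3 \<Longrightarrow> pn_e r r' n4 \<Longrightarrow> pn_e e e' n5 \<Longrightarrow>
     pn_e (XEq tx t l r e) (XEq tx' t' l' r' e') (Suc (n1 + n2 + n3 + n4 + n5))"
| pn_tref: "pn_e r r' n \<Longrightarrow> pn_t (TRef b r) (TRef b r') (Suc n)"
| pn_tfun: "pn_t tx tx' n1 \<Longrightarrow> pn_t t t' n2 \<Longrightarrow> pn_t (TFun tx t) (TFun tx' t') (Suc (n1 + n2))"
| pn_peq: "pn_t t t' n1 \<Longrightarrow> pn_e l l' n2 \<Longrightarrow> pn_e r r' n3 \<Longrightarrow> pn_t (PEq t l r) (PEq t' l' r') (Suc (n1 + n2 + n3))"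

lemma pn_par:
  "pn_e e e' n \<Longrightarrow> par_e e e'"
  "pn_t t t' n \<Longrightarrow> par_t t t'"
  by (induct rule: pn_e_pn_t.inducts) (auto intro: par_e_par_t.intros)

lemma par_pn:
  "par_e e e' \<Longrightarrow> \<exists>n. pn_e e e' n"
  "par_t t t' \<Longrightarrow> \<exists>n. pn_t t t' n"
  by (induct rule: par_e_par_t.inducts) (auto intro: pn_e_pn_t.intros)

lemma value_lift: "is_value v \<Longrightarrow> is_value (lift_e k v)"
  by (induct rule: is_value.induct) (auto intro: is_value.intros)

lemma value_subst: "is_value v \<Longrightarrow> is_value (subst_e k s v)"
  by (induct rule: is_value.induct) (auto intro: is_value.intros)

lemma pn_lift:
  "pn_e e e' n \<Longrightarrow> pn_e (lift_e k e) (lift_e k e') n"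
  "pn_t t t' n \<Longrightarrow> pn_t (lift_t k t) (lift_t k t') n"
proof (induct arbitrary: k and k rule: pn_e_pn_t.inducts)
  case (pn_beta v e e' n1 v' n2 t)
  have "lift_e k (inst e' v') = inst (lift_e (Suc k) e') (lift_e k v')"
    by (simp add: inst_def lift_subst2)
  moreover have "occ_e 0 (lift_e (Suc k) e') = occ_e 0 e'" by (simp add: occ_lift)
  ultimately show ?case using pn_beta
    by (metis lift_e.simps(3,4) pn_e_pn_t.pn_beta value_lift)
qed (auto intro: pn_e_pn_t.intros)

lemma pn_subst:
  "pn_e e e' n1 \<Longrightarrow> pn_e s s' n2 \<Longrightarrow>
     \<exists>m \<le> n1 + occ_e k e' * n2. pn_e (subst_e k s e) (subst_e k s' e') m"
  "pn_t t t' n1 \<Longrightarrow> pn_e s s' n2 \<Longrightarrow>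
     \<exists>m \<le> n1 + occ_t k t' * n2. pn_t (subst_t k s t) (subst_t k s' t') m"
proof (induct arbitrary: k s s' n2 and k s s' n2 rule: pn_e_pn_t.inducts)
  case (pn_var x)
  show ?case
  proof (cases "x = k")
    case True
    then show ?thesis using pn_var by (intro exI[of _ n2]) auto
  qed (auto intro!: exI[of _ "Suc 0"] pn_e_pn_t.intros)
next
  case (pn_const c)
  then show ?case by (auto intro: pn_e_pn_t.intros)
next
  case (pn_lam t t' n1 e e' n2')
  have l: "pn_e (lift_e 0 s) (lift_e 0 s') n2" by (rule pn_lift(1)) fact
  obtain m1 where m1: "m1 \<le> n1 + occ_t k t' * n2" "pn_t (subst_t k s t) (subst_t k s' t') m1"
    using pn_lam by blast
  obtain m2 where m2: "m2 \<le> n2' + occ_e (Suc k) e' * n2" 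
    "pn_e (subst_e (Suc k) (lift_e 0 s) e) (subst_e (Suc k) (lift_e 0 s') e') m2"
    using pn_lam(4)[OF l] by blast
  show ?case using m1 m2 unfolding subst_e.simps subst_t.simps by (intro exI[of _ "Suc (m1+m2)"] conjI pn_e_pn_t.intros) (auto simp: algebra_simps)
next
  case (pn_app e1 e1' n1 e2 e2' n2')
  obtain m1 where m1: "m1 \<le> n1 + occ_e k e1' * n2" "pn_e (subst_e k s e1) (subst_e k s' e1') m1"
    using pn_app by blast
  obtain m2 where m2: "m2 \<le> n2' + occ_e k e2' * n2" "pn_e (subst_e k s e2) (subst_e k s' e2') m2"
    using pn_app by blast
  show ?case using m1 m2 unfolding subst_e.simps subst_t.simps by (intro exI[of _ "Suc (m1+m2)"] conjI pn_e_pn_t.intros) (auto simp: algebra_simps)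
next
  case (pn_beta v e e' n1 v' n2' t)
  have l: "pn_e (lift_e 0 s) (lift_e 0 s') n2" by (rule pn_lift(1)) fact
  obtain m1 where m1: "m1 \<le> n1 + occ_e (Suc k) e' * n2" 
    "pn_e (subst_e (Suc k) (lift_e 0 s) e) (subst_e (Suc k) (lift_e 0 s') e') m1"
    using pn_beta(3)[OF l] by blast
  obtain m2 where m2: "m2 \<le> n2' + occ_e k v' * n2" "pn_e (subst_e k s v) (subst_e k s' v') m2"
    using pn_beta by blast
  have eq: "subst_e k s' (inst e' v') = inst (subst_e (Suc k) (lift_e 0 s') e') (subst_e k s' v')"
    by (simp add: inst_def subst_subst)
  have oc: "occ_e 0 (subst_e (Suc k) (lift_e 0 s') e') = occ_e 0 e'"
    by (simp add: occ_subst occ_lift)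
  have ok: "occ_e k (inst e' v') = occ_e (Suc k) e' + occ_e 0 e' * occ_e k v'"
    by (simp add: inst_def occ_subst)
  have "pn_e (subst_e k s (App (Lam t e) v)) (subst_e k s' (inst e' v')) (m1 + occ_e 0 e' * m2 + 1)"
    using pn_e_pn_t.pn_beta[OF value_subst[OF pn_beta(1)] m1(2) m2(2), of "subst_t k s t"] eq oc
    by simp
  moreover have "occ_e 0 e' * m2 \<le> occ_e 0 e' * (n2' + occ_e k v' * n2)"
    using m2(1) by simp
  ultimately show ?case using m1(1) ok
    by (intro exI[of _ "m1 + occ_e 0 e' * m2 + 1"]) (auto simp: algebra_simps)
next
  case (pn_eq1 b c1)
  then show ?case by (auto intro: pn_e_pn_t.intros)
next
  case (pn_eq2 c1 b c2)
  then show ?case by (auto intro: pn_e_pn_t.intros)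
next
  case (pn_beq l l' n1 r r' n2' e e' n3 b)
  obtain m1 where m1: "m1 \<le> n1 + occ_e k l' * n2" "pn_e (subst_e k s l) (subst_e k s' l') m1"
    using pn_beq by blast
  obtain m2 where m2: "m2 \<le> n2' + occ_e k r' * n2" "pn_e (subst_e k s r) (subst_e k s' r') m2"
    using pn_beq by blast
  obtain m3 where m3: "m3 \<le> n3 + occ_e k e' * n2" "pn_e (subst_e k s e) (subst_e k s' e') m3"
    using pn_beq by blast
  show ?case using m1 m2 m3 unfolding subst_e.simps subst_t.simps by (intro exI[of _ "Suc (m1+m2+m3)"] conjI pn_e_pn_t.intros) (auto simp: algebra_simps)
next
  case (pn_xeq tx tx' n1 t t' n2' l l' n3 r r' n4 e e' n5)
  have lf: "pn_e (lift_e 0 s) (lift_e 0 s') n2" by (rule pn_lift(1)) fact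
  obtain m1 where m1: "m1 \<le> n1 + occ_t k tx' * n2" "pn_t (subst_t k s tx) (subst_t k s' tx') m1"
    using pn_xeq(2)[OF pn_xeq.prems] by blast
  obtain m2 where m2: "m2 \<le> n2' + occ_t (Suc k) t' * n2"
    "pn_t (subst_t (Suc k) (lift_e 0 s) t) (subst_t (Suc k) (lift_e 0 s') t') m2"
    using pn_xeq(4)[OF lf] by blast
  obtain m3 where m3: "m3 \<le> n3 + occ_e k l' * n2" "pn_e (subst_e k s l) (subst_e k s' l') m3"
    using pn_xeq(6)[OF pn_xeq.prems] by blast
  obtain m4 where m4: "m4 \<le> n4 + occ_e k r' * n2" "pn_e (subst_e k s r) (subst_e k s' r') m4"
    using pn_xeq(8)[OF pn_xeq.prems] by blast
  obtain m5 where m5: "m5 \<le> n5 + occ_e k e' * n2" "pn_e (subst_e k s e) (subst_e k s' e') m5"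
    using pn_xeq(10)[OF pn_xeq.prems] by blast
  show ?case using m1 m2 m3 m4 m5 unfolding subst_e.simps subst_t.simps by (intro exI[of _ "Suc (m1+m2+m3+m4+m5)"] conjI pn_e_pn_t.intros) (auto simp: algebra_simps)
next
  case (pn_tref r r' n b)
  have lf: "pn_e (lift_e 0 s) (lift_e 0 s') n2" by (rule pn_lift(1)) fact
  obtain m1 where m1: "m1 \<le> n + occ_e (Suc k) r' * n2"
    "pn_e (subst_e (Suc k) (lift_e 0 s) r) (subst_e (Suc k) (lift_e 0 s') r') m1"
    using pn_tref(2)[OF lf] by blast
  show ?case using m1 unfolding subst_e.simps subst_t.simps by (intro exI[of _ "Suc m1"] conjI pn_e_pn_t.intros) (auto simp: algebra_simps)
next
  case (pn_tfun tx tx' n1 t t' n2')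
  have lf: "pn_e (lift_e 0 s) (lift_e 0 s') n2" by (rule pn_lift(1)) fact
  obtain m1 where m1: "m1 \<le> n1 + occ_t k tx' * n2" "pn_t (subst_t k s tx) (subst_t k s' tx') m1"
    using pn_tfun by blast
  obtain m2 where m2: "m2 \<le> n2' + occ_t (Suc k) t' * n2"
    "pn_t (subst_t (Suc k) (lift_e 0 s) t) (subst_t (Suc k) (lift_e 0 s') t') m2"
    using pn_tfun(4)[OF lf] by blast
  show ?case using m1 m2 unfolding subst_e.simps subst_t.simps by (intro exI[of _ "Suc (m1+m2)"] conjI pn_e_pn_t.intros) (auto simp: algebra_simps)
next
  case (pn_peq t t' n1 l l' n2' r r' n3)
  obtain m1 where m1: "m1 \<le> n1 + occ_t k t' * n2" "pn_t (subst_t k s t) (subst_t k s' t') m1"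
    using pn_peq by blast
  obtain m2 where m2: "m2 \<le> n2' + occ_e k l' * n2" "pn_e (subst_e k s l) (subst_e k s' l') m2"
    using pn_peq by blast
  obtain m3 where m3: "m3 \<le> n3 + occ_e k r' * n2" "pn_e (subst_e k s r) (subst_e k s' r') m3"
    using pn_peq by blast
  show ?case using m1 m2 m3 unfolding subst_e.simps subst_t.simps by (intro exI[of _ "Suc (m1+m2+m3)"] conjI pn_e_pn_t.intros) (auto simp: algebra_simps)
qed

lemma value_nostep: "is_value v \<Longrightarrow> \<not> step v e"
proof (induct arbitrary: e rule: is_value.induct)
  case (1 c) then show ?case by (auto elim: step.cases)
next
  case (2 t e) then show ?case by (auto elim: step.cases)
next
  case (3 v b l r) then show ?case by (auto elim: step.cases)
next
  case (4 v tx t l r) then show ?case by (auto elim: step.cases)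
qed

lemma par_const_inv: "par_e (Const c) x \<Longrightarrow> x = Const c"
  by (auto elim: par_e.cases)

lemma par_lam_inv: "par_e (Lam t b) x \<Longrightarrow> \<exists>t' b'. x = Lam t' b' \<and> par_e b b'"
  by (auto elim: par_e.cases)

lemma par_value: "is_value v \<Longrightarrow> par_e v v' \<Longrightarrow> is_value v'"
proof (induct arbitrary: v' rule: is_value.induct)
  case (1 c) then show ?case using par_const_inv is_value.intros by metis
next
  case (2 t e) then show ?case using par_lam_inv is_value.intros by metis
next
  case (3 v b l r) from 3(3) show ?case by (cases rule: par_e.cases) (auto intro: is_value.intros 3)
next
  case (4 v tx t l r) from 4(3) show ?case by (cases rule: par_e.cases) (auto intro: is_value.intros 4)
qed

lemma par_inst: "par_e b b' \<Longrightarrow> par_e w w' \<Longrightarrow> par_e (inst b w) (inst b' w')"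
  unfolding inst_def using par_pn(1) pn_par(1) pn_subst(1) by metis

lemma steps_app1: "step\<^sup>*\<^sup>* a b \<Longrightarrow> step\<^sup>*\<^sup>* (App a c) (App b c)"
  by (induct rule: rtranclp_induct) (auto intro: rtranclp.rtrancl_into_rtrancl step.intros)

lemma steps_app2: "step\<^sup>*\<^sup>* a b \<Longrightarrow> is_value v \<Longrightarrow> step\<^sup>*\<^sup>* (App v a) (App v b)"
  by (induct rule: rtranclp_induct) (auto intro: rtranclp.rtrancl_into_rtrancl step.intros)

lemma steps_beq: "step\<^sup>*\<^sup>* a b \<Longrightarrow> step\<^sup>*\<^sup>* (BEq bb l r a) (BEq bb l r b)"
  by (induct rule: rtranclp_induct) (auto intro: rtranclp.rtrancl_into_rtrancl step.intros)

lemma steps_xeq: "step\<^sup>*\<^sup>* a b \<Longrightarrow> step\<^sup>*\<^sup>* (XEq tx t l r a) (XEq tx t l r b)"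
  by (induct rule: rtranclp_induct) (auto intro: rtranclp.rtrancl_into_rtrancl step.intros)

lemma forward_step: "step e f \<Longrightarrow> par_e e e' \<Longrightarrow> \<exists>f'. par_e f f' \<and> step\<^sup>*\<^sup>* e' f'"
proof (induct arbitrary: e' rule: step.induct)
  case (step_app1 e1 g e2)
  from step_app1.prems show ?case
  proof (cases rule: par_e.cases)
    case (par_app e1' e2')
    then obtain g' where "par_e g g'" "step\<^sup>*\<^sup>* e1' g'" using step_app1 by blast
    then show ?thesis using par_app by (auto intro!: exI[of _ "App g' e2'"] par_e_par_t.intros steps_app1)
  next
    case par_beta
    then show ?thesis using step_app1 value_nostep is_value.intros by metis
  qed (use step_app1 value_nostep is_value.intros in metis)+
next
  case (step_app2 v e2 g)
  from step_app2.prems show ?case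
  proof (cases rule: par_e.cases)
    case (par_app v' e2')
    then obtain g' where "par_e g g'" "step\<^sup>*\<^sup>* e2' g'" using step_app2 by blast
    moreover have "is_value v'" using par_app step_app2 par_value by blast
    ultimately show ?thesis using par_app by (auto intro!: exI[of _ "App v' g'"] par_e_par_t.intros steps_app2)
  next
    case par_beta
    then show ?thesis using step_app2 value_nostep by metis
  qed (use step_app2 value_nostep is_value.intros in metis)+
next
  case (step_beq e g b l r)
  from step_beq.prems show ?case
  proof (cases rule: par_e.cases)
    case (par_beq l' r' e')
    then obtain g' where "par_e g g'" "step\<^sup>*\<^sup>* e' g'" using step_beq by blast
    then show ?thesis using par_beq by (auto intro!: exI[of _ "BEq b l' r' g'"] par_e_par_t.intros steps_beq)
  qed
next
  case (step_xeq e g tx t l r)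
  from step_xeq.prems show ?case
  proof (cases rule: par_e.cases)
    case (par_xeq tx' t' l' r' e')
    then obtain g' where "par_e g g'" "step\<^sup>*\<^sup>* e' g'" using step_xeq by blast
    then show ?thesis using par_xeq by (auto intro!: exI[of _ "XEq tx' t' l' r' g'"] par_e_par_t.intros steps_xeq)
  qed
next
  case (step_beta v t b)
  from step_beta.prems show ?case
  proof (cases rule: par_e.cases)
    case (par_app L' v')
    then obtain t' b' where L: "L' = Lam t' b'" "par_e b b'" using par_lam_inv by blast
    have "is_value v'" using par_app step_beta par_value by blast
    then have "step e' (inst b' v')" using par_app L step.step_beta by simp
    then show ?thesis using par_inst[OF L(2) par_app(3)] by blast
  next
    case par_beta
    then show ?thesis using par_inst by blast
  qed
next
  case (step_eq1 b c1)
  from step_eq1.prems show ?case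
  proof (cases rule: par_e.cases)
    case (par_app e1' e2')
    then show ?thesis using par_const_inv step.step_eq1 par_e_par_t.par_const
      by (metis r_into_rtranclp)
  qed (auto intro: par_e_par_t.intros)
next
  case (step_eq2 c1 b c2)
  from step_eq2.prems show ?case
  proof (cases rule: par_e.cases)
    case (par_app e1' e2')
    then show ?thesis using par_const_inv step.step_eq2 par_e_par_t.par_const
      by (metis r_into_rtranclp)
  qed (auto intro: par_e_par_t.intros)
qed

lemma forward: "step\<^sup>*\<^sup>* e (Const c) \<Longrightarrow> par_e e e' \<Longrightarrow> step\<^sup>*\<^sup>* e' (Const c)"
proof -
  have "step\<^sup>*\<^sup>* e f \<Longrightarrow> par_e e e' \<Longrightarrow> \<exists>f'. par_e f f' \<and> step\<^sup>*\<^sup>* e' f'" for f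
  proof (induct arbitrary: rule: rtranclp_induct)
    case base then show ?case by blast
  next
    case (step y z)
    then obtain y' where "par_e y y'" "step\<^sup>*\<^sup>* e' y'" by blast
    then show ?case using forward_step[OF step(2)] by (meson rtranclp_trans)
  qed
  then show "step\<^sup>*\<^sup>* e (Const c) \<Longrightarrow> par_e e e' \<Longrightarrow> step\<^sup>*\<^sup>* e' (Const c)"
    using par_const_inv by blast
qed

lemma pn_inst_smaller:
  assumes "pn_e b b' n1" "pn_e v v' n2"
  shows "\<exists>m < Suc (n1 + occ_e 0 b' * n2). pn_e (inst b v) (inst b' v') m"
  using pn_subst(1)[OF assms, of 0] unfolding inst_def by (meson le_imp_less_Suc)

lemma to_value:
  "pn_e e w n \<Longrightarrow> is_value w \<Longrightarrow> \<exists>v. step\<^sup>*\<^sup>* e v \<and> is_value v \<and> par_e v w"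
proof (induct n arbitrary: e w rule: less_induct)
  case (less n)
  from less.prems(1) show ?case
  proof (cases rule: pn_e.cases)
    case (pn_var x) then show ?thesis using less.prems by (auto elim: is_value.cases)
  next
    case (pn_const c) then show ?thesis by (auto intro: is_value.intros par_e_par_t.intros)
  next
    case (pn_lam t t' n1 b b' n2)
    then show ?thesis using pn_par by (blast intro: is_value.intros par_e_par_t.intros)
  next
    case (pn_app e1 e1' n1 e2 e2' n2)
    then show ?thesis using less.prems by (auto elim: is_value.cases)
  next
    case (pn_beta v b b' n1 v' n2 t)
    then obtain m where m: "m < n" "pn_e (inst b v) (inst b' v') m" using pn_inst_smaller by blast
    then obtain u where "step\<^sup>*\<^sup>* (inst b v) u" "is_value u" "par_e u w"
      using less.hyps less.prems pn_beta by blast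
    moreover have "step e (inst b v)" using pn_beta step.step_beta by simp
    ultimately show ?thesis by (meson converse_rtranclp_into_rtranclp)
  next
    case (pn_eq1 b c1)
    then show ?thesis by (metis is_value.intros(1) par_e_par_t.par_const r_into_rtranclp step.step_eq1)
  next
    case (pn_eq2 c1 b c2)
    then show ?thesis by (metis is_value.intros(1) par_e_par_t.par_const r_into_rtranclp step.step_eq2)
  next
    case (pn_beq l l' n1 r r' n2 e0 e0' n3 b)
    have "is_value e0'" using less.prems pn_beq by (auto elim: is_value.cases)
    moreover have "n3 < n" using pn_beq by simp
    ultimately obtain u where u: "step\<^sup>*\<^sup>* e0 u" "is_value u" "par_e u e0'"
      using less.hyps pn_beq by blast
    then show ?thesis using pn_beq pn_par steps_beq
      by (metis is_value.intros(3) par_e_par_t.par_beq)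
  next
    case (pn_xeq tx tx' n1 t t' n2 l l' n3 r r' n4 e0 e0' n5)
    have "is_value e0'" using less.prems pn_xeq by (auto elim: is_value.cases)
    moreover have "n5 < n" using pn_xeq by simp
    ultimately obtain u where u: "step\<^sup>*\<^sup>* e0 u" "is_value u" "par_e u e0'"
      using less.hyps pn_xeq by blast
    then show ?thesis using pn_xeq pn_par steps_xeq
      by (metis is_value.intros(4) par_e_par_t.par_xeq)
  qed
qed

lemma value_par_lam: assumes "is_value v" "par_e v (Lam t' b')" shows "\<exists>t b. v = Lam t b \<and> par_e b b'"
  using assms(1)
proof (cases rule: is_value.cases)
  case 1 then show ?thesis using par_const_inv assms(2) by blast
next
  case 2 then show ?thesis using par_lam_inv assms(2) by blast
next
  case 3 then show ?thesis using par_e.cases[OF assms(2)] by auto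
next
  case 4 then show ?thesis using par_e.cases[OF assms(2)] by auto
qed

lemma value_par_const: assumes "is_value v" "par_e v (Const c)" shows "v = Const c"
  using assms(1)
proof (cases rule: is_value.cases)
  case 1 then show ?thesis using par_const_inv assms(2) by blast
next
  case 2 then show ?thesis using par_lam_inv assms(2) by blast
next
  case 3 then show ?thesis using par_e.cases[OF assms(2)] by auto
next
  case 4 then show ?thesis using par_e.cases[OF assms(2)] by auto
qed

lemma backward_step:
  "pn_e e e' n \<Longrightarrow> step e' f' \<Longrightarrow> \<exists>f. step\<^sup>*\<^sup>* e f \<and> par_e f f'"
proof (induct n arbitrary: e e' f' rule: less_induct)
  case (less n)
  from less.prems(1) show ?case
  proof (cases rule: pn_e.cases)
    case (pn_var x) then show ?thesis using less.prems by (auto elim: step.cases)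
  next
    case (pn_const c) then show ?thesis using less.prems by (auto elim: step.cases)
  next
    case (pn_lam t t' n1 b b' n2)
    then show ?thesis using less.prems by (auto elim: step.cases)
  next
    case (pn_app e1 e1' n1 e2 e2' n2)
    have n1: "n1 < n" and n2: "n2 < n" using pn_app by auto
    from less.prems(2)[unfolded pn_app] show ?thesis
    proof (cases rule: step.cases)
      case (step_app1 g')
      then obtain g where "step\<^sup>*\<^sup>* e1 g" "par_e g g'" using less.hyps[OF n1] pn_app by blast
      moreover have "par_e e2 e2'" using pn_app pn_par by blast
      ultimately show ?thesis using pn_app step_app1 steps_app1
        by (blast intro: par_e_par_t.par_app)
    next
      case (step_app2 g')
      then obtain v1 where v1: "step\<^sup>*\<^sup>* e1 v1" "is_value v1" "par_e v1 e1'"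
        using to_value pn_app by blast
      obtain g where g: "step\<^sup>*\<^sup>* e2 g" "par_e g g'" using less.hyps[OF n2] pn_app step_app2 by blast
      have "step\<^sup>*\<^sup>* e (App v1 g)" unfolding pn_app(1)
        using rtranclp_trans[OF steps_app1[OF v1(1)] steps_app2[OF g(1) v1(2)]] .
      then show ?thesis using v1 g step_app2 by (blast intro: par_e_par_t.par_app)
    next
      case (step_beta t' b')
      have "is_value e1'" using step_beta is_value.intros by simp
      then obtain v1 where v1: "step\<^sup>*\<^sup>* e1 v1" "is_value v1" "par_e v1 (Lam t' b')"
        using to_value pn_app step_beta by metis
      then obtain t b where tb: "v1 = Lam t b" "par_e b b'" using value_par_lam by blast
      obtain v2 where v2: "step\<^sup>*\<^sup>* e2 v2" "is_value v2" "par_e v2 e2'"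
        using to_value pn_app step_beta by blast
      have "step\<^sup>*\<^sup>* e (App v1 v2)" unfolding pn_app(1)
        using rtranclp_trans[OF steps_app1[OF v1(1)] steps_app2[OF v2(1) v1(2)]] .
      moreover have "step (App v1 v2) (inst b v2)" using tb v2 step.step_beta by simp
      ultimately have "step\<^sup>*\<^sup>* e (inst b v2)" by (rule rtranclp.rtrancl_into_rtrancl)
      moreover have "par_e (inst b v2) (inst b' e2')" using par_inst tb v2 by blast
      ultimately show ?thesis using step_beta by blast
    next
      case (step_eq1 b c1)
      obtain v1 where v1: "step\<^sup>*\<^sup>* e1 v1" "is_value v1" "par_e v1 e1'"
        using to_value pn_app step_eq1 is_value.intros by metis
      obtain v2 where v2: "step\<^sup>*\<^sup>* e2 v2" "is_value v2" "par_e v2 e2'"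
        using to_value pn_app step_eq1 is_value.intros by metis
      have "v1 = e1'" "v2 = e2'" using v1 v2 value_par_const step_eq1 by auto
      then have "step\<^sup>*\<^sup>* e (App e1' e2')" unfolding pn_app(1)
        using rtranclp_trans[OF steps_app1[OF v1(1)] steps_app2[OF v2(1) v1(2)]] by simp
      moreover have "step (App e1' e2') f'" using step_eq1 step.step_eq1 by simp
      ultimately show ?thesis using step_eq1 par_e_par_t.par_const
        by (blast intro: rtranclp.rtrancl_into_rtrancl)
    next
      case (step_eq2 c1 b c2)
      obtain v1 where v1: "step\<^sup>*\<^sup>* e1 v1" "is_value v1" "par_e v1 e1'"
        using to_value pn_app step_eq2 is_value.intros by metis
      obtain v2 where v2: "step\<^sup>*\<^sup>* e2 v2" "is_value v2" "par_e v2 e2'"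
        using to_value pn_app step_eq2 is_value.intros by metis
      have "v1 = e1'" "v2 = e2'" using v1 v2 value_par_const step_eq2 by auto
      then have "step\<^sup>*\<^sup>* e (App e1' e2')" unfolding pn_app(1)
        using rtranclp_trans[OF steps_app1[OF v1(1)] steps_app2[OF v2(1) v1(2)]] by simp
      moreover have "step (App e1' e2') f'" using step_eq2 step.step_eq2 by simp
      ultimately show ?thesis using step_eq2 par_e_par_t.par_const
        by (blast intro: rtranclp.rtrancl_into_rtrancl)
    qed
  next
    case (pn_beta v b b' n1 v' n2 t)
    then obtain m where m: "m < n" "pn_e (inst b v) (inst b' v') m" using pn_inst_smaller by blast
    then obtain u where "step\<^sup>*\<^sup>* (inst b v) u" "par_e u f'"
      using less.hyps less.prems pn_beta by blast
    moreover have "step e (inst b v)" using pn_beta step.step_beta by simp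
    ultimately show ?thesis by (meson converse_rtranclp_into_rtranclp)
  next
    case (pn_eq1 b c1)
    then show ?thesis using less.prems by (auto elim: step.cases)
  next
    case (pn_eq2 c1 b c2)
    then show ?thesis using less.prems by (auto elim: step.cases)
  next
    case (pn_beq l l' n1 r r' n2 e0 e0' n3 b)
    have n3: "n3 < n" using pn_beq by simp
    from less.prems(2)[unfolded pn_beq] show ?thesis
    proof (cases rule: step.cases)
      case (step_beq g')
      then obtain g where "step\<^sup>*\<^sup>* e0 g" "par_e g g'" using less.hyps[OF n3] pn_beq by blast
      moreover have "par_e l l'" "par_e r r'" using pn_beq pn_par by blast+
      ultimately show ?thesis using pn_beq step_beq steps_beq
        by (blast intro: par_e_par_t.par_beq)
    qed
  next
    case (pn_xeq tx tx' n1 t t' n2 l l' n3 r r' n4 e0 e0' n5)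
    have n5: "n5 < n" using pn_xeq by simp
    from less.prems(2)[unfolded pn_xeq] show ?thesis
    proof (cases rule: step.cases)
      case (step_xeq g')
      then obtain g where "step\<^sup>*\<^sup>* e0 g" "par_e g g'" using less.hyps[OF n5] pn_xeq by blast
      moreover have "par_t tx tx'" "par_t t t'" "par_e l l'" "par_e r r'" using pn_xeq pn_par by blast+
      ultimately show ?thesis using pn_xeq step_xeq steps_xeq
        by (blast intro: par_e_par_t.par_xeq)
    qed
  qed
qed

lemma backward: "step\<^sup>*\<^sup>* e' (Const c) \<Longrightarrow> par_e e e' \<Longrightarrow> step\<^sup>*\<^sup>* e (Const c)"
proof (induct arbitrary: e rule: converse_rtranclp_induct)
  case base
  then obtain n where "pn_e e (Const c) n" using par_pn by blast
  then obtain v where "step\<^sup>*\<^sup>* e v" "is_value v" "par_e v (Const c)"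
    using to_value is_value.intros(1) by blast
  then show ?case using value_par_const by blast
next
  case (step y z)
  obtain n where "pn_e e y n" using par_pn step by blast
  then obtain f where f1: "step\<^sup>*\<^sup>* e f" and f2: "par_e f z" using backward_step step by blast
  have "step\<^sup>*\<^sup>* f (Const c)" using step(3) f2 by blast
  then show ?case using rtranclp_trans[OF f1] by blast
qed

theorem corollaryC17:
  assumes "par_e\<^sup>*\<^sup>* e1 e2"
  shows "\<forall>c. step\<^sup>*\<^sup>* e1 (Const c) \<longleftrightarrow> step\<^sup>*\<^sup>* e2 (Const c)"
  using assms
proof (induct rule: rtranclp_induct)
  case base then show ?case by simp
next
  case (step y z)
  show ?case
  proof
    fix c
    have "step\<^sup>*\<^sup>* y (Const c) \<longleftrightarrow> step\<^sup>*\<^sup>* z (Const c)"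
      using forward[of y c z] backward[of z c y] step(2) by blast
    then show "step\<^sup>*\<^sup>* e1 (Const c) \<longleftrightarrow> step\<^sup>*\<^sup>* z (Const c)" using step(3) by blast
  qed
qed

end
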